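(* Let $(L,\preceq)$ be a lattice and $\delta$ a local congruence on $L$. Then the relation $\preceq_\delta$ on $L/\delta$ is a partial order if and only if every $\delta$-cycle in $L$ is closed.
   Context: For an equivalence relation $\delta$ on $L$, $[a]_\delta$ is the class of $a$ and $L/\delta$ the set of classes. A local congruence on a lattice $(L,\preceq)$ is an equivalence relation each of whose classes is a sublattice of $L$ and is convex (if $u,v$ are in the class and $u\preceq w\preceq v$, then $w$ is in the class). A $\delta$-sequence from $p_0$ to $p_n$ is a finite sequence $(p_0,p_1,\dots,p_n)$ of elements of $L$ with $n\ge1$ such that for each $i\in\{1,\dots,n\}$ either $(p_{i-1},p_i)\in\delta$ or $p_{i-1}\preceq p_i$. A $\delta$-cycle is a $\delta$-sequence $(p_0,\dots,p_n)$ with $p_0=p_n$; it is closed if $[p_0]_\delta=[p_1]_\delta=\dots=[p_n]_\delta$. The relation $\preceq_\delta$ on $L/\delta$ is defined by $[x]_\delta\preceq_\delta[y]_\delta$ iff there exists a $\delta$-sequence from some $x'\in[x]_\delta$ to some $y'\in[y]_\delta$ (it is always a preorder). *)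

theory Defs
  imports Main
begin

text \<open>The lattice (L, \<preceq>) is the carrier type 'a of class lattice (L = UNIV, \<preceq> = \<le>).\<close>

definition local_congruence :: "('a::lattice) rel \<Rightarrow> bool" where
  "local_congruence \<delta> \<longleftrightarrow> equiv UNIV \<delta> \<and>
     (\<forall>C \<in> UNIV // \<delta>.
        (\<forall>x\<in>C. \<forall>y\<in>C. inf x y \<in> C \<and> sup x y \<in> C) \<and>
        (\<forall>u\<in>C. \<forall>v\<in>C. \<forall>w. u \<le> w \<and> w \<le> v \<longrightarrow> w \<in> C))"

definition delta_seq :: "('a::order) rel \<Rightarrow> (nat \<Rightarrow> 'a) \<Rightarrow> nat \<Rightarrow> bool" where
  "delta_seq \<delta> p n \<longleftrightarrow> 1 \<le> n \<and>
     (\<forall>i\<in>{1..n}. (p (i - 1), p i) \<in> \<delta> \<or> p (i - 1) \<le> p i)"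

definition delta_cycle :: "('a::order) rel \<Rightarrow> (nat \<Rightarrow> 'a) \<Rightarrow> nat \<Rightarrow> bool" where
  "delta_cycle \<delta> p n \<longleftrightarrow> delta_seq \<delta> p n \<and> p 0 = p n"

definition closed_cycle :: "'a rel \<Rightarrow> (nat \<Rightarrow> 'a) \<Rightarrow> nat \<Rightarrow> bool" where
  "closed_cycle \<delta> p n \<longleftrightarrow> (\<forall>i\<in>{0..n}. \<delta> `` {p i} = \<delta> `` {p 0})"

definition quot_rel :: "('a::order) rel \<Rightarrow> 'a set rel" where
  "quot_rel \<delta> = {(X, Y). X \<in> UNIV // \<delta> \<and> Y \<in> UNIV // \<delta> \<and>
      (\<exists>p n. delta_seq \<delta> p n \<and> p 0 \<in> X \<and> p n \<in> Y)}"

end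

theory Submission
  imports Defs
begin

definition reach :: "('a::order) rel \<Rightarrow> 'a \<Rightarrow> 'a \<Rightarrow> bool" where
  "reach \<delta> x y \<longleftrightarrow> (\<exists>p n. delta_seq \<delta> p n \<and> p 0 = x \<and> p n = y)"

lemma seq_concat:
  assumes "delta_seq \<delta> p n" "delta_seq \<delta> q m" "(p n, q 0) \<in> \<delta> \<or> p n \<le> q 0"
  shows "delta_seq \<delta> (\<lambda>i. if i \<le> n then p i else q (i - n - 1)) (n + m + 1)"
proof -
  define c where "c = (\<lambda>i. if i \<le> n then p i else q (i - n - 1))"
  have "(c (i - 1), c i) \<in> \<delta> \<or> c (i - 1) \<le> c i" if i: "i \<in> {1..n+m+1}" for i
  proof (cases "i \<le> n")
    case True
    hence "c (i - 1) = p (i - 1)" "c i = p i" unfolding c_def by auto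
    then show ?thesis using assms(1) i True unfolding delta_seq_def by auto
  next
    case False
    show ?thesis
    proof (cases "i = n + 1")
      case True
      hence "c (i - 1) = p n" "c i = q 0" unfolding c_def by auto
      then show ?thesis using assms(3) by simp
    next
      case False
      define j where "j = i - n - 1"
      have j: "j \<in> {1..m}" "i = j + n + 1" using False \<open>\<not> i \<le> n\<close> i unfolding j_def by auto
      hence "c (i - 1) = q (j - 1)" "c i = q j" unfolding c_def by auto
      moreover have "(q (j - 1), q j) \<in> \<delta> \<or> q (j - 1) \<le> q j"
        using assms(2) j(1) unfolding delta_seq_def by blast
      ultimately show ?thesis by simp
    qed
  qed
  then show ?thesis unfolding delta_seq_def c_def[symmetric] by simp
qed

lemma reach_refl: "reach \<delta> x x"
  unfolding reach_def delta_seq_def by (rule exI[of _ "\<lambda>_. x"], rule exI[of _ 1]) auto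

lemma reach_step: "(x, y) \<in> \<delta> \<or> x \<le> y \<Longrightarrow> reach \<delta> x y"
  unfolding reach_def delta_seq_def
  by (rule exI[of _ "\<lambda>i. if i = 0 then x else y"], rule exI[of _ 1]) auto

lemma reach_join:
  assumes "reach \<delta> x y" "(y, z) \<in> \<delta> \<or> y \<le> z" "reach \<delta> z w"
  shows "reach \<delta> x w"
proof -
  obtain p n where p: "delta_seq \<delta> p n" "p 0 = x" "p n = y" using assms(1) reach_def by metis
  obtain q m where q: "delta_seq \<delta> q m" "q 0 = z" "q m = w" using assms(3) reach_def by metis
  show ?thesis unfolding reach_def
    using seq_concat[OF p(1) q(1)] p q assms(2)
    by (intro exI[of _ "\<lambda>i. if i \<le> n then p i else q (i - n - 1)"] exI[of _ "n + m + 1"]) auto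
qed

lemma reach_trans: "reach \<delta> x y \<Longrightarrow> reach \<delta> y z \<Longrightarrow> reach \<delta> x z"
  using reach_join[of \<delta> x y y z] by auto

lemma quot_rel_iff:
  assumes "equiv UNIV \<delta>"
  shows "(\<delta>``{x}, \<delta>``{y}) \<in> quot_rel \<delta> \<longleftrightarrow> reach \<delta> x y"
proof
  assume "(\<delta>``{x}, \<delta>``{y}) \<in> quot_rel \<delta>"
  then obtain p n where p: "delta_seq \<delta> p n" "p 0 \<in> \<delta>``{x}" "p n \<in> \<delta>``{y}"
    unfolding quot_rel_def by auto
  have "(x, p 0) \<in> \<delta>" "(p n, y) \<in> \<delta>" using p assms
    by (auto dest: equiv_class_eq_iff[THEN iffD1] simp: equiv_def sym_def)
  moreover have "reach \<delta> (p 0) (p n)" using p reach_def by metis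
  ultimately show "reach \<delta> x y"
    using reach_join[OF reach_refl[of \<delta> x]] reach_join[of \<delta> _ "p n" y y, OF _ _ reach_refl]
    by metis
next
  assume "reach \<delta> x y"
  then obtain p n where p: "delta_seq \<delta> p n" "p 0 = x" "p n = y" using reach_def by metis
  have "x \<in> \<delta>``{x}" "y \<in> \<delta>``{y}" using assms by (auto simp: equiv_def refl_on_def)
  then show "(\<delta>``{x}, \<delta>``{y}) \<in> quot_rel \<delta>"
    unfolding quot_rel_def using p by (auto intro: quotientI)
qed

lemma seq_prefix: "delta_seq \<delta> p n \<Longrightarrow> 1 \<le> k \<Longrightarrow> k \<le> n \<Longrightarrow> delta_seq \<delta> p k"
  unfolding delta_seq_def by auto

lemma seq_suffix:
  assumes "delta_seq \<delta> p n" "k < n"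
  shows "delta_seq \<delta> (\<lambda>i. p (i + k)) (n - k)"
  unfolding delta_seq_def
proof (intro conjI ballI)
  fix i assume i: "i \<in> {1..n-k}"
  hence "i + k \<in> {1..n}" "i + k - 1 = i - 1 + k" using assms by auto
  then show "(p (i - 1 + k), p (i + k)) \<in> \<delta> \<or> p (i - 1 + k) \<le> p (i + k)"
    using assms(1) unfolding delta_seq_def by metis
qed (use assms in auto)

theorem theorem4p7:
  fixes \<delta> :: "('a::lattice) rel"
  assumes "local_congruence \<delta>"
  shows "partial_order_on (UNIV // \<delta>) (quot_rel \<delta>) \<longleftrightarrow>
         (\<forall>p n. delta_cycle \<delta> p n \<longrightarrow> closed_cycle \<delta> p n)"
proof -
  have eq: "equiv UNIV \<delta>" using assms local_congruence_def by blast
  have pre: "preorder_on (UNIV // \<delta>) (quot_rel \<delta>)"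
    unfolding preorder_on_def
  proof (intro conjI)
    show "quot_rel \<delta> \<subseteq> UNIV // \<delta> \<times> UNIV // \<delta>" unfolding quot_rel_def by auto
    show "refl_on (UNIV // \<delta>) (quot_rel \<delta>)" unfolding refl_on_def
      using quot_rel_iff[OF eq] reach_refl by (auto elim!: quotientE)
    show "trans (quot_rel \<delta>)" unfolding trans_def
    proof (intro allI impI)
      fix X Y Z assume a: "(X, Y) \<in> quot_rel \<delta>" "(Y, Z) \<in> quot_rel \<delta>"
      hence "X \<in> UNIV // \<delta>" "Y \<in> UNIV // \<delta>" "Z \<in> UNIV // \<delta>" unfolding quot_rel_def by auto
      then obtain x y z where "X = \<delta>``{x}" "Y = \<delta>``{y}" "Z = \<delta>``{z}" by (auto elim!: quotientE)
      then show "(X, Z) \<in> quot_rel \<delta>" using a quot_rel_iff[OF eq] reach_trans by metis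
    qed
  qed
  have "antisym (quot_rel \<delta>) \<longleftrightarrow> (\<forall>p n. delta_cycle \<delta> p n \<longrightarrow> closed_cycle \<delta> p n)"
  proof
    assume as: "antisym (quot_rel \<delta>)"
    show "\<forall>p n. delta_cycle \<delta> p n \<longrightarrow> closed_cycle \<delta> p n"
    proof (intro allI impI)
      fix p n assume c: "delta_cycle \<delta> p n"
      hence s: "delta_seq \<delta> p n" and e: "p 0 = p n" unfolding delta_cycle_def by auto
      show "closed_cycle \<delta> p n" unfolding closed_cycle_def
      proof
        fix i assume i: "i \<in> {0..n}"
        have r1: "reach \<delta> (p 0) (p i)"
        proof (cases "i = 0")
          case True then show ?thesis using reach_refl by simp
        next
          case False then show ?thesis using seq_prefix[OF s, of i] i reach_def by fastforce
        qed
        have r2: "reach \<delta> (p i) (p 0)"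
        proof (cases "i = n")
          case True then show ?thesis using reach_refl e by simp
        next
          case False
          hence "i < n" using i by auto
          from seq_suffix[OF s this] show ?thesis unfolding reach_def using e \<open>i < n\<close>
            by (intro exI[of _ "\<lambda>j. p (j + i)"] exI[of _ "n - i"]) auto
        qed
        show "\<delta>``{p i} = \<delta>``{p 0}"
          using as r1 r2 quot_rel_iff[OF eq] unfolding antisym_on_def by blast
      qed
    qed
  next
    assume cyc: "\<forall>p n. delta_cycle \<delta> p n \<longrightarrow> closed_cycle \<delta> p n"
    show "antisym (quot_rel \<delta>)" unfolding antisym_on_def
    proof (intro ballI impI)
      fix X Y assume a: "(X, Y) \<in> quot_rel \<delta>" "(Y, X) \<in> quot_rel \<delta>"
      hence "X \<in> UNIV // \<delta>" "Y \<in> UNIV // \<delta>" unfolding quot_rel_def by auto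
      then obtain x y where xy: "X = \<delta>``{x}" "Y = \<delta>``{y}" by (auto elim!: quotientE)
      hence "reach \<delta> x y" "reach \<delta> y x" using a quot_rel_iff[OF eq] by auto
      then obtain p n q m where p: "delta_seq \<delta> p n" "p 0 = x" "p n = y"
        and q: "delta_seq \<delta> q m" "q 0 = y" "q m = x" unfolding reach_def by metis
      let ?c = "\<lambda>i. if i \<le> n then p i else q (i - n - 1)"
      have "delta_seq \<delta> ?c (n + m + 1)" using seq_concat[OF p(1) q(1)] p q by auto
      moreover have "?c 0 = ?c (n + m + 1)" using p q by auto
      ultimately have "closed_cycle \<delta> ?c (n + m + 1)" using cyc delta_cycle_def by blast
      moreover have "n \<in> {0..n + m + 1}" by simp
      ultimately have "\<delta>``{?c n} = \<delta>``{?c 0}" unfolding closed_cycle_def by blast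
      then show "X = Y" using xy p by simp
    qed
  qed
  then show ?thesis using pre unfolding partial_order_on_def by blast
qed

end
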